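(* Let $D$ be a square-free integer with $D\equiv 2\pmod 4$, let $\mathbb{Z}[\sqrt{D}]=\{x+y\sqrt D:x,y\in\mathbb{Z}\}$, and let $p$ be a prime integer which is irreducible but not prime in $\mathbb{Z}[\sqrt{D}]$, with $p\equiv 3\pmod 4$. Let $z\in I_p(D)$ with $p+\lVert z\rVert/p\equiv 2\pmod 4$. Then $A(p,z)$ does not have property (CZ).
   Context: $\bar z$ is the conjugate and $\lVert z\rVert=z\bar z$ the norm. $I_p(D)$ is the set of all non-unit $z\in\mathbb{Z}[\sqrt{D}]$ such that $z\notin\langle p\rangle$ but there exists $m\notin\langle p\rangle$ with $zm\in\langle p\rangle$ (for such $z$, $p$ divides $\lVert z\rVert$). $A(p,z)=\begin{pmatrix} p & z\\ \bar z & \lVert z\rVert/p\end{pmatrix}$. A matrix $A(p,z)$ has property (CZ) if there exist $a,b,c\in\mathbb{Z}[\sqrt{D}]$ with $a(1-a)=bc$ such that $A(p,z)=\begin{pmatrix} a&b\\ c&1-a\end{pmatrix}\begin{pmatrix}\bar a&\bar c\\ \bar b&1-\bar a\end{pmatrix}$. *)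

theory Defs
  imports "HOL-Computational_Algebra.Computational_Algebra"
begin

text \<open>Elements of Z[sqrt D] are represented as pairs (x,y) of integers standing for x + y sqrt D.
  The ring operations depend on the parameter D.\<close>

type_synonym zsqrt = "int \<times> int"

definition zof :: "int \<Rightarrow> zsqrt" where "zof n = (n, 0)"

definition zadd :: "zsqrt \<Rightarrow> zsqrt \<Rightarrow> zsqrt" where
  "zadd u v = (fst u + fst v, snd u + snd v)"

definition zsub :: "zsqrt \<Rightarrow> zsqrt \<Rightarrow> zsqrt" where
  "zsub u v = (fst u - fst v, snd u - snd v)"

definition zmul :: "int \<Rightarrow> zsqrt \<Rightarrow> zsqrt \<Rightarrow> zsqrt" where
  "zmul D u v = (fst u * fst v + D * snd u * snd v, fst u * snd v + snd u * fst v)"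

definition zconj :: "zsqrt \<Rightarrow> zsqrt" where
  "zconj u = (fst u, - snd u)"

definition znorm :: "int \<Rightarrow> zsqrt \<Rightarrow> int" where
  "znorm D u = fst u ^ 2 - D * snd u ^ 2"

definition zunit :: "int \<Rightarrow> zsqrt \<Rightarrow> bool" where
  "zunit D u \<longleftrightarrow> (\<exists>w. zmul D u w = zof 1)"

definition zdvd :: "int \<Rightarrow> zsqrt \<Rightarrow> zsqrt \<Rightarrow> bool" where
  "zdvd D u v \<longleftrightarrow> (\<exists>w. v = zmul D u w)"

definition in_principal :: "int \<Rightarrow> zsqrt \<Rightarrow> zsqrt \<Rightarrow> bool" where
  "in_principal D u v \<longleftrightarrow> zdvd D u v"

definition zirreducible :: "int \<Rightarrow> zsqrt \<Rightarrow> bool" where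
  "zirreducible D u \<longleftrightarrow> u \<noteq> zof 0 \<and> \<not> zunit D u \<and>
     (\<forall>a b. u = zmul D a b \<longrightarrow> zunit D a \<or> zunit D b)"

definition zprime :: "int \<Rightarrow> zsqrt \<Rightarrow> bool" where
  "zprime D u \<longleftrightarrow> u \<noteq> zof 0 \<and> \<not> zunit D u \<and>
     (\<forall>a b. zdvd D u (zmul D a b) \<longrightarrow> zdvd D u a \<or> zdvd D u b)"

definition Ip :: "int \<Rightarrow> int \<Rightarrow> zsqrt set" where
  "Ip p D = {z. \<not> zunit D z \<and> \<not> in_principal D (zof p) z \<and>
     (\<exists>m. \<not> in_principal D (zof p) m \<and> in_principal D (zof p) (zmul D z m))}"

text \<open>Property (CZ) of A(p,z) = [[p, z], [conj z, N(z)/p]]: there exist a b c with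
  a(1-a) = bc and A(p,z) = [[a,b],[c,1-a]] * [[conj a, conj c],[conj b, 1 - conj a]]
  (the matrix product written out entrywise).\<close>
definition has_CZ :: "int \<Rightarrow> int \<Rightarrow> zsqrt \<Rightarrow> bool" where
  "has_CZ D p z \<longleftrightarrow> (\<exists>a b c.
     zmul D a (zsub (zof 1) a) = zmul D b c \<and>
     zadd (zmul D a (zconj a)) (zmul D b (zconj b)) = zof p \<and>
     zadd (zmul D a (zconj c)) (zmul D b (zsub (zof 1) (zconj a))) = z \<and>
     zadd (zmul D c (zconj a)) (zmul D (zsub (zof 1) a) (zconj b)) = zconj z \<and>
     zadd (zmul D c (zconj c)) (zmul D (zsub (zof 1) a) (zsub (zof 1) (zconj a)))
        = zof (znorm D z div p))"

end

theory Submission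
  imports Defs
begin

lemma sq4: "\<exists>m. (x::int)^2 = 4*m + (if even x then 0 else 1)"
proof (cases "even x")
  case True then obtain t where "x = 2*t" by blast
  then have "x^2 = 4*t^2 + 0" by (simp add: power2_eq_square)
  then show ?thesis using True by auto
next
  case False then obtain t where "x = 2*t+1" using oddE by blast
  then have "x^2 = 4*(t^2+t) + 1" by (simp add: power2_eq_square algebra_simps)
  then show ?thesis using False by (intro exI[of _ "t^2+t"]) simp
qed

lemma dsq4: assumes "(D::int) mod 4 = 2" shows "\<exists>m. D*y^2 = 4*m + (if even y then 0 else 2)"
proof -
  obtain k where D: "D = 4*k+2" using assms by (metis mult.commute div_mult_mod_eq)
  show ?thesis
  proof (cases "even y")
    case True then obtain t where "y = 2*t" by blast
    then have "D*y^2 = 4*(D*t^2) + 0" by (simp add: power2_eq_square)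
    then show ?thesis using True by auto
  next
    case False then obtain t where "y = 2*t+1" using oddE by blast
    then have "D*y^2 = 4*(k + 2*t + 2*t^2 + 4*k*t + 4*k*t^2) + 2" by (simp add: D power2_eq_square algebra_simps)
    then show ?thesis using False by (intro exI[of _ "k + 2*t + 2*t^2 + 4*k*t + 4*k*t^2"]) simp
  qed
qed

lemma key:
  fixes D p q a1 a2 b1 b2 c1 c2 :: int
  assumes D: "D mod 4 = 2"
    and hp: "p = (a1^2 - D*a2^2) + (b1^2 - D*b2^2)"
    and hq: "q = (c1^2 - D*c2^2) + ((1-a1)^2 - D*a2^2)"
    and e: "a2 - 2*a1*a2 = b1*c2 + b2*c1"
    and p3: "p mod 4 = 3" and pq: "(p+q) mod 4 = 2"
  shows False
proof -
  obtain m1 where m1: "a1^2 = 4*m1 + (if even a1 then 0 else 1)" using sq4 by blast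
  obtain m2 where m2: "b1^2 = 4*m2 + (if even b1 then 0 else 1)" using sq4 by blast
  obtain m3 where m3: "c1^2 = 4*m3 + (if even c1 then 0 else 1)" using sq4 by blast
  obtain m4 where m4: "(1-a1)^2 = 4*m4 + (if even (1-a1) then 0 else 1)" using sq4 by blast
  obtain n1 where n1: "D*a2^2 = 4*n1 + (if even a2 then 0 else 2)" using dsq4[OF D] by blast
  obtain n2 where n2: "D*b2^2 = 4*n2 + (if even b2 then 0 else 2)" using dsq4[OF D] by blast
  obtain n3 where n3: "D*c2^2 = 4*n3 + (if even c2 then 0 else 2)" using dsq4[OF D] by blast
  have ev1: "even (1-a1) = odd a1" by simp
  have E: "even a2 = even (b1*c2 + b2*c1)"
  proof -
    have "even (a2 - 2*a1*a2) = even a2" by simp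
    then show ?thesis using e by simp
  qed
  define r where "r = (if even a1 then 0 else 1) - (if even a2 then 0 else 2)
     + (if even b1 then 0 else 1) - (if even b2 then (0::int) else 2)"
  define r' where "r' = (if even c1 then 0 else 1) - (if even c2 then 0 else 2)
     + (if even a1 then 1 else 0) - (if even a2 then (0::int) else 2)"
  have hp': "p = r + 4*(m1-n1+m2-n2)"
    using hp m1 m2 n1 n2 unfolding r_def by simp
  have hq': "q = r' + 4*(m3-n3+m4-n1)"
    using hq m3 m4 n3 n1 ev1 unfolding r'_def by simp
  have P: "r mod 4 = 3" using p3 unfolding hp' mod_mult_self2 .
  have "p + q = (r + r') + 4*(m1-n1+m2-n2 + (m3-n3+m4-n1))" unfolding hp' hq' by (simp add: algebra_simps)
  then have Q: "(r + r') mod 4 = 2" using pq by (metis mod_mult_self2)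
  show False
    using P Q E unfolding r_def r'_def
    by (cases "even a1"; cases "even a2"; cases "even b1"; cases "even b2"; cases "even c1"; cases "even c2"; simp)
qed

theorem corollary3p8:
  fixes D p :: int and z :: zsqrt
  assumes "squarefree D" and "D mod 4 = 2"
    and "prime p" and "zirreducible D (zof p)" and "\<not> zprime D (zof p)"
    and "p mod 4 = 3"
    and "z \<in> Ip p D"
    and "(p + znorm D z div p) mod 4 = 2"
  shows "\<not> has_CZ D p z"
proof
  assume "has_CZ D p z"
  then obtain a b c where
    h1: "zmul D a (zsub (zof 1) a) = zmul D b c" and
    h2: "zadd (zmul D a (zconj a)) (zmul D b (zconj b)) = zof p" and
    h5: "zadd (zmul D c (zconj c)) (zmul D (zsub (zof 1) a) (zsub (zof 1) (zconj a)))
        = zof (znorm D z div p)"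
    unfolding has_CZ_def by blast
  obtain a1 a2 where a: "a = (a1,a2)" by fastforce
  obtain b1 b2 where b: "b = (b1,b2)" by fastforce
  obtain c1 c2 where c: "c = (c1,c2)" by fastforce
  have e1: "a2 - 2*a1*a2 = b1*c2 + b2*c1"
    using arg_cong[OF h1, of snd] by (simp add: a b c zmul_def zsub_def zof_def algebra_simps)
  have e2: "p = (a1^2 - D*a2^2) + (b1^2 - D*b2^2)"
    using arg_cong[OF h2, of fst] by (simp add: a b c zmul_def zadd_def zconj_def zof_def power2_eq_square algebra_simps)
  have e5: "znorm D z div p = (c1^2 - D*c2^2) + ((1-a1)^2 - D*a2^2)"
    using arg_cong[OF h5, of fst] by (simp add: a b c zmul_def zadd_def zsub_def zconj_def zof_def power2_eq_square algebra_simps)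
  show False using key[OF assms(2) e2 e5 e1 assms(6) assms(8)] .
qed

end
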